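(* Let $A$ be an $m\times n$ matrix with entries in $[0,1]$ and no zero column, let $\epsilon>0$, $\alpha>0$, and run DIMSUM on $A$ with parameter $\gamma\ge \alpha/\epsilon$, producing $B$. Then for any two columns $c_i,c_j$ with $\cos(c_i,c_j)\ge\epsilon$ and any $\delta>0$, $$\Pr\left[\|c_i\|\|c_j\|\,b_{ij}>(1+\delta)[A^TA]_{ij}\right]\le\left(\frac{e^{\delta}}{(1+\delta)^{1+\delta}}\right)^{\alpha},$$ and for any $\delta\in(0,1)$, $$\Pr\left[\|c_i\|\|c_j\|\,b_{ij}<(1-\delta)[A^TA]_{ij}\right]<\exp(-\alpha\delta^2/2).$$
   Context: Let $A=(a_{ki})$ be an $m\times n$ real matrix with rows $r_1,\dots,r_m$ and columns $c_1,\dots,c_n$; $\|c_i\|$ is the Euclidean norm of column $i$ (assumed nonzero), and $\cos(c_i,c_j)=\frac{c_i^Tc_j}{\|c_i\|\|c_j\|}$. DIMSUM with parameter $\gamma>0$ is the following randomized procedure. For each pair of column indices $(i,j)$ set $p_{ij}=\min\!\left(1,\frac{\gamma}{\|c_i\|\|c_j\|}\right)$. For each row $k$ and each pair $(i,j)$ with $a_{ki}a_{kj}\neq 0$, independently (over all $k$ and all pairs) with probability $p_{ij}$ the value $a_{ki}a_{kj}$ is emitted to key $(i,j)$ (one "emission"); equivalently let $X_{ijk}$ equal $a_{ki}a_{kj}$ with probability $p_{ij}$ and $0$ otherwise. The output is the $n\times n$ matrix $B$ with $b_{ij}=\frac{1}{\gamma}\sum_{k=1}^m X_{ijk}$ if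 $\frac{\gamma}{\|c_i\|\|c_j\|}\le 1$, and $b_{ij}=\frac{1}{\|c_i\|\|c_j\|}\sum_{k=1}^m X_{ijk}$ otherwise. *)

theory Defs
  imports "HOL-Probability.Probability"
begin

text \<open>An m x n real matrix is represented as A :: nat => nat => real, with entry
  a_ki = A k i for row k < m and column i < n.\<close>

definition col_norm :: "(nat \<Rightarrow> nat \<Rightarrow> real) \<Rightarrow> nat \<Rightarrow> nat \<Rightarrow> real" where
  "col_norm A m i = sqrt (\<Sum>k<m. (A k i)\<^sup>2)"

definition col_inner :: "(nat \<Rightarrow> nat \<Rightarrow> real) \<Rightarrow> nat \<Rightarrow> nat \<Rightarrow> nat \<Rightarrow> real" where
  "col_inner A m i j = (\<Sum>k<m. A k i * A k j)"

definition col_cos :: "(nat \<Rightarrow> nat \<Rightarrow> real) \<Rightarrow> nat \<Rightarrow> nat \<Rightarrow> nat \<Rightarrow> real" where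
  "col_cos A m i j = col_inner A m i j / (col_norm A m i * col_norm A m j)"

definition dimsum_p :: "(nat \<Rightarrow> nat \<Rightarrow> real) \<Rightarrow> nat \<Rightarrow> real \<Rightarrow> nat \<Rightarrow> nat \<Rightarrow> real" where
  "dimsum_p A m \<gamma> i j = min 1 (\<gamma> / (col_norm A m i * col_norm A m j))"

definition dimsum_slots :: "(nat \<Rightarrow> nat \<Rightarrow> real) \<Rightarrow> nat \<Rightarrow> nat \<Rightarrow> (nat \<times> nat \<times> nat) set" where
  "dimsum_slots A m n = {(k,i,j). k < m \<and> i < n \<and> j < n \<and> A k i * A k j \<noteq> 0}"

text \<open>Randomness of DIMSUM: independent coin flips, slot (k,i,j) succeeds
  (i.e. emits a_ki a_kj to key (i,j)) with probability p_ij.\<close>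
definition dimsum_coins ::
  "(nat \<Rightarrow> nat \<Rightarrow> real) \<Rightarrow> nat \<Rightarrow> nat \<Rightarrow> real \<Rightarrow> (nat \<times> nat \<times> nat \<Rightarrow> bool) pmf" where
  "dimsum_coins A m n \<gamma> =
     Pi_pmf (dimsum_slots A m n) False (\<lambda>(k,i,j). bernoulli_pmf (dimsum_p A m \<gamma> i j))"

definition dimsum_X ::
  "(nat \<Rightarrow> nat \<Rightarrow> real) \<Rightarrow> (nat \<times> nat \<times> nat \<Rightarrow> bool) \<Rightarrow> nat \<Rightarrow> nat \<Rightarrow> nat \<Rightarrow> real" where
  "dimsum_X A \<omega> i j k = (if \<omega> (k,i,j) then A k i * A k j else 0)"

definition dimsum_b ::
  "(nat \<Rightarrow> nat \<Rightarrow> real) \<Rightarrow> nat \<Rightarrow> real \<Rightarrow> (nat \<times> nat \<times> nat \<Rightarrow> bool) \<Rightarrow> nat \<Rightarrow> nat \<Rightarrow> real" where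
  "dimsum_b A m \<gamma> \<omega> i j =
     (if \<gamma> / (col_norm A m i * col_norm A m j) \<le> 1
      then (1 / \<gamma>) * (\<Sum>k<m. dimsum_X A \<omega> i j k)
      else (1 / (col_norm A m i * col_norm A m j)) * (\<Sum>k<m. dimsum_X A \<omega> i j k))"

end

theory Submission
  imports Defs
begin

lemma markov_pmf:
  fixes M :: "'a pmf" and Z :: "'a \<Rightarrow> real"
  assumes fin: "finite (set_pmf M)" and E: "\<And>\<omega>. \<omega> \<in> E \<Longrightarrow> u \<le> Z \<omega>" and u: "u > 0"
    and nn: "\<And>\<omega>. Z \<omega> \<ge> 0"
  shows "measure_pmf.prob M E \<le> measure_pmf.expectation M Z / u"
proof -
  have "measure_pmf.prob M E = measure_pmf.expectation M (indicator E)"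
    by simp
  also have "\<dots> \<le> measure_pmf.expectation M (\<lambda>\<omega>. Z \<omega> / u)"
  proof (rule integral_mono)
    show "integrable (measure_pmf M) (indicator E :: 'a \<Rightarrow> real)"
      by (rule integrable_measure_pmf_finite[OF fin])
    show "integrable (measure_pmf M) (\<lambda>\<omega>. Z \<omega> / u)"
      by (rule integrable_measure_pmf_finite[OF fin])
    fix \<omega> show "indicator E \<omega> \<le> Z \<omega> / u"
      using E[of \<omega>] u nn[of \<omega>] by (auto simp: indicator_def field_simps)
  qed
  also have "\<dots> = measure_pmf.expectation M Z / u" by simp
  finally show ?thesis .
qed

lemma exp_convex_01:
  fixes a t :: real assumes "0 \<le> a" "a \<le> 1"
  shows "exp (t * a) \<le> 1 - a + a * exp t"
proof -
  have "exp ((1 - a) * 0 + a * t) \<le> (1 - a) * exp 0 + a * exp t"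
    using convex_onD[OF exp_convex, of a 0 t] assms by simp
  then show ?thesis by (simp add: mult.commute)
qed

lemma ln_lt_aux:
  fixes x :: real assumes "x > 1"
  shows "ln x < (x - 1/x) / 2"
proof -
  define f where "f y = (y - 1/y)/2 - ln y" for y :: real
  have d: "\<And>y. 1 < y \<Longrightarrow> y < x \<Longrightarrow> (f has_real_derivative ((y-1)^2/(2*y^2))) (at y)"
  proof -
    fix y :: real assume y: "1 < y" "y < x"
    have "(f has_real_derivative ((1 + 1/y^2)/2 - 1/y)) (at y)"
      unfolding f_def using y
      by (auto intro!: derivative_eq_intros simp: power2_eq_square field_simps)
    moreover have "(1 + 1/y^2)/2 - 1/y = (y-1)^2/(2*y^2)"
      using y by (simp add: field_simps power2_eq_square)
    ultimately show "(f has_real_derivative ((y-1)^2/(2*y^2))) (at y)" by simp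
  qed
  have "f 1 < f x"
  proof (rule DERIV_pos_imp_increasing_open[OF assms])
    fix y :: real assume y: "1 < y" "y < x"
    show "\<exists>z. (f has_real_derivative z) (at y) \<and> 0 < z"
      using d[OF y] y by (intro exI[of _ "(y-1)^2/(2*y^2)"]) auto
  next
    show "continuous_on {1..x} f"
      unfolding f_def by (intro continuous_intros) auto
  qed
  then show ?thesis by (simp add: f_def)
qed


lemma slots_finite: "finite (dimsum_slots A m n)"
proof -
  have "dimsum_slots A m n \<subseteq> {..<m} \<times> {..<n} \<times> {..<n}"
    by (auto simp: dimsum_slots_def)
  then show ?thesis by (rule finite_subset) auto
qed

lemma coins_finite: "finite (set_pmf (dimsum_coins A m n \<gamma>))"
  unfolding dimsum_coins_def
  by (subst set_Pi_pmf[OF slots_finite]) (intro finite_PiE_dflt slots_finite, auto)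

lemma p_nonneg: "\<gamma> \<ge> 0 \<Longrightarrow> 0 \<le> dimsum_p A m \<gamma> i j"
  unfolding dimsum_p_def col_norm_def by (auto intro!: divide_nonneg_nonneg mult_nonneg_nonneg sum_nonneg)

lemma p_le1: "dimsum_p A m \<gamma> i j \<le> 1"
  unfolding dimsum_p_def by simp

lemma mgf_bound:
  fixes A :: "nat \<Rightarrow> nat \<Rightarrow> real" and t \<gamma> :: real
  assumes entries: "\<And>k l. k < m \<Longrightarrow> l < n \<Longrightarrow> 0 \<le> A k l \<and> A k l \<le> 1"
    and ij: "i < n" "j < n" and g: "\<gamma> \<ge> 0"
  shows "measure_pmf.expectation (dimsum_coins A m n \<gamma>)
           (\<lambda>\<omega>. exp (t * (\<Sum>k<m. dimsum_X A \<omega> i j k)))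
         \<le> exp (dimsum_p A m \<gamma> i j * col_inner A m i j * (exp t - 1))"
proof -
  define Sl where "Sl = dimsum_slots A m n"
  define T where "T = (\<lambda>k. (k,i,j)) ` {..<m}"
  define p where "p = dimsum_p A m \<gamma> i j"
  define g where "g s b = (if fst (snd s) = i \<and> snd (snd s) = j \<and> b
                   then exp (t * (A (fst s) i * A (fst s) j)) else 1)" for s :: "nat \<times> nat \<times> nat" and b
  define h where "h s = (if fst (snd s) = i \<and> snd (snd s) = j
                   then p * (A (fst s) i * A (fst s) j) * (exp t - 1) else 0)" for s :: "nat \<times> nat \<times> nat"
  have finSl: "finite Sl" unfolding Sl_def by (rule slots_finite)
  have finT: "finite T" unfolding T_def by simp
  have injT: "inj_on (\<lambda>k. (k,i,j)) {..<m}" by (auto simp: inj_on_def)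
  have zero: "A k i * A k j = 0" if "k < m" "(k,i,j) \<notin> Sl" for k
    using that ij unfolding Sl_def dimsum_slots_def by auto
  have ST: "(\<Prod>s\<in>Sl. F s) = (\<Prod>s\<in>T. F s)"
    if F1: "\<And>s. s \<in> Sl - T \<Longrightarrow> F s = 1" and F2: "\<And>s. s \<in> T - Sl \<Longrightarrow> F s = 1" for F
  proof -
    have "(\<Prod>s\<in>Sl. F s) = (\<Prod>s\<in>Sl \<union> T. F s)"
      by (rule prod.mono_neutral_left) (use finSl finT F2 in auto)
    also have "\<dots> = (\<Prod>s\<in>T. F s)"
      by (rule prod.mono_neutral_right) (use finSl finT F1 in auto)
    finally show ?thesis .
  qed
  have SlT: "s \<in> Sl - T \<Longrightarrow> \<not> (fst (snd s) = i \<and> snd (snd s) = j)" for s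
    unfolding Sl_def T_def dimsum_slots_def by auto
  have TSl: "s \<in> T - Sl \<Longrightarrow> A (fst s) i * A (fst s) j = 0 \<and> fst (snd s) = i \<and> snd (snd s) = j" for s
    using zero unfolding T_def by force
  have prodeq: "exp (t * (\<Sum>k<m. dimsum_X A \<omega> i j k)) = (\<Prod>s\<in>Sl. g s (\<omega> s))" for \<omega>
  proof -
    have "exp (t * (\<Sum>k<m. dimsum_X A \<omega> i j k)) = (\<Prod>k<m. exp (t * dimsum_X A \<omega> i j k))"
      by (simp add: sum_distrib_left exp_sum)
    also have "\<dots> = (\<Prod>k<m. g (k,i,j) (\<omega> (k,i,j)))"
      by (rule prod.cong) (auto simp: g_def dimsum_X_def)
    also have "\<dots> = (\<Prod>s\<in>T. g s (\<omega> s))"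
      unfolding T_def by (subst prod.reindex[OF injT]) (simp add: o_def)
    also have "\<dots> = (\<Prod>s\<in>Sl. g s (\<omega> s))"
    proof (rule ST[symmetric])
      fix s assume "s \<in> Sl - T" from SlT[OF this] show "g s (\<omega> s) = 1" unfolding g_def by auto
    next
      fix s assume "s \<in> T - Sl" from TSl[OF this] show "g s (\<omega> s) = 1" by (simp add: g_def)
    qed
    finally show ?thesis .
  qed
  have pS: "s \<in> Sl \<Longrightarrow> fst (snd s) = i \<Longrightarrow> snd (snd s) = j \<Longrightarrow> dimsum_p A m \<gamma> (fst (snd s)) (snd (snd s)) = p" for s
    by (simp add: p_def)
  have "measure_pmf.expectation (dimsum_coins A m n \<gamma>)
           (\<lambda>\<omega>. exp (t * (\<Sum>k<m. dimsum_X A \<omega> i j k)))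
        = measure_pmf.expectation (Pi_pmf Sl False (\<lambda>(k,i,j). bernoulli_pmf (dimsum_p A m \<gamma> i j)))
            (\<lambda>\<omega>. \<Prod>s\<in>Sl. g s (\<omega> s))"
    by (simp add: prodeq dimsum_coins_def Sl_def)
  also have "\<dots> = (\<Prod>s\<in>Sl. measure_pmf.expectation ((\<lambda>(k,i,j). bernoulli_pmf (dimsum_p A m \<gamma> i j)) s) (g s))"
    by (rule expectation_prod_Pi_pmf[OF finSl])
       (auto simp: g_def intro!: integrable_measure_pmf_finite)
  also have "\<dots> \<le> (\<Prod>s\<in>Sl. exp (h s))"
  proof (rule prod_mono)
    fix s assume sS: "s \<in> Sl"
    obtain k a b where s: "s = (k,a,b)" by (cases s)
    have p01: "0 \<le> dimsum_p A m \<gamma> a b" "dimsum_p A m \<gamma> a b \<le> 1"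
      using p_nonneg[OF g] p_le1 by auto
    have E: "measure_pmf.expectation ((\<lambda>(k,i,j). bernoulli_pmf (dimsum_p A m \<gamma> i j)) s) (g s)
          = g s True * dimsum_p A m \<gamma> a b + g s False * (1 - dimsum_p A m \<gamma> a b)"
      using p01 s by simp
    have ge: "g s True \<ge> 0" "g s False \<ge> 0" by (auto simp: g_def)
    have le: "g s True * dimsum_p A m \<gamma> a b + g s False * (1 - dimsum_p A m \<gamma> a b) \<le> exp (h s)"
    proof (cases "a = i \<and> b = j")
      case True
      have km: "k < m" using sS s unfolding Sl_def dimsum_slots_def by auto
      define x where "x = A k i * A k j"
      have x01: "0 \<le> x" "x \<le> 1" using entries[OF km ij(1)] entries[OF km ij(2)]
        unfolding x_def by (auto intro: mult_le_one)
      have p01': "0 \<le> p" "p \<le> 1" using p01 True by (auto simp: p_def)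
      have "g s True * dimsum_p A m \<gamma> a b + g s False * (1 - dimsum_p A m \<gamma> a b)
            = exp (t * x) * p + (1 - p)"
        using True s by (simp add: g_def x_def p_def)
      also have "\<dots> \<le> (1 - x + x * exp t) * p + (1 - p)"
        using exp_convex_01[OF x01, of t] p01' by (intro add_right_mono mult_right_mono) auto
      also have "\<dots> = 1 + p * x * (exp t - 1)" by (simp add: algebra_simps)
      also have "\<dots> \<le> exp (p * x * (exp t - 1))" by (rule exp_ge_add_one_self)
      finally show ?thesis using True s by (simp add: h_def x_def)
    next
      case False
      then show ?thesis using s by (auto simp: g_def h_def)
    qed
    show "0 \<le> measure_pmf.expectation ((\<lambda>(k,i,j). bernoulli_pmf (dimsum_p A m \<gamma> i j)) s) (g s)
          \<and> measure_pmf.expectation ((\<lambda>(k,i,j). bernoulli_pmf (dimsum_p A m \<gamma> i j)) s) (g s) \<le> exp (h s)"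
      unfolding E using le ge p01 by auto
  qed
  also have "\<dots> = exp (\<Sum>s\<in>Sl. h s)" by (simp add: exp_sum finSl)
  also have "(\<Sum>s\<in>Sl. h s) = (\<Sum>s\<in>T. h s)"
  proof -
    have "(\<Sum>s\<in>Sl. h s) = (\<Sum>s\<in>Sl \<union> T. h s)"
    proof (rule sum.mono_neutral_left)
      show "\<forall>s\<in>Sl \<union> T - Sl. h s = 0"
      proof
        fix s assume "s \<in> Sl \<union> T - Sl" then have "s \<in> T - Sl" by auto
        from TSl[OF this] show "h s = 0" unfolding h_def by simp
      qed
    qed (use finSl finT in auto)
    also have "\<dots> = (\<Sum>s\<in>T. h s)"
    proof (rule sum.mono_neutral_right)
      show "\<forall>s\<in>Sl \<union> T - T. h s = 0"
      proof
        fix s assume "s \<in> Sl \<union> T - T" then have "s \<in> Sl - T" by auto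
        from SlT[OF this] show "h s = 0" unfolding h_def by auto
      qed
    qed (use finSl finT in auto)
    finally show ?thesis .
  qed
  also have "\<dots> = (\<Sum>k<m. p * (A k i * A k j) * (exp t - 1))"
    unfolding T_def by (subst sum.reindex[OF injT]) (simp add: h_def)
  also have "\<dots> = p * col_inner A m i j * (exp t - 1)"
    by (simp add: col_inner_def sum_distrib_left sum_distrib_right mult.assoc)
  finally show ?thesis by (simp add: p_def)
qed


lemma col_norm_pos:
  assumes "\<exists>k<m. A k l \<noteq> 0" shows "col_norm A m l > 0"
proof -
  from assms obtain k where k: "k < m" "A k l \<noteq> 0" by auto
  have "0 < (A k l)\<^sup>2" using k by simp
  also have "\<dots> \<le> (\<Sum>k<m. (A k l)\<^sup>2)"
    by (rule member_le_sum) (use k in auto)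
  finally show ?thesis unfolding col_norm_def by simp
qed

theorem theorem3:
  fixes A :: "nat \<Rightarrow> nat \<Rightarrow> real" and m n :: nat and \<epsilon> \<alpha> \<gamma> :: real and i j :: nat
  assumes entries: "\<And>k l. k < m \<Longrightarrow> l < n \<Longrightarrow> 0 \<le> A k l \<and> A k l \<le> 1"
    and nonzero_cols: "\<And>l. l < n \<Longrightarrow> \<exists>k<m. A k l \<noteq> 0"
    and eps: "\<epsilon> > 0" and alpha: "\<alpha> > 0" and gamma: "\<gamma> \<ge> \<alpha> / \<epsilon>"
    and ij: "i < n" "j < n"
    and cos: "col_cos A m i j \<ge> \<epsilon>"
  shows "(\<forall>\<delta>>0. measure_pmf.prob (dimsum_coins A m n \<gamma>)
            {\<omega>. col_norm A m i * col_norm A m j * dimsum_b A m \<gamma> \<omega> i j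
                   > (1 + \<delta>) * col_inner A m i j}
          \<le> (exp \<delta> / (1 + \<delta>) powr (1 + \<delta>)) powr \<alpha>)
       \<and> (\<forall>\<delta>. 0 < \<delta> \<and> \<delta> < 1 \<longrightarrow> measure_pmf.prob (dimsum_coins A m n \<gamma>)
            {\<omega>. col_norm A m i * col_norm A m j * dimsum_b A m \<gamma> \<omega> i j
                   < (1 - \<delta>) * col_inner A m i j}
          < exp (- \<alpha> * \<delta>\<^sup>2 / 2))"
proof -
  define M where "M = dimsum_coins A m n \<gamma>"
  define c where "c = col_norm A m i * col_norm A m j"
  define inner where "inner = col_inner A m i j"
  define S where "S \<omega> = (\<Sum>k<m. dimsum_X A \<omega> i j k)" for \<omega>
  define p where "p = dimsum_p A m \<gamma> i j"
  have c: "c > 0" unfolding c_def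
    using col_norm_pos[of m A i, OF nonzero_cols[OF ij(1)]] col_norm_pos[of m A j, OF nonzero_cols[OF ij(2)]] by simp
  have inner_ge: "inner \<ge> \<epsilon> * c"
    using cos c unfolding col_cos_def inner_def c_def by (simp add: field_simps)
  have inner_pos: "inner > 0" using inner_ge eps c
    by (smt (verit) mult_pos_pos)
  have g0: "\<gamma> > 0" using gamma eps alpha
    by (smt (verit) divide_pos_pos)
  have ge: "\<gamma> * \<epsilon> \<ge> \<alpha>" using gamma eps by (simp add: field_simps)
  have finM: "finite (set_pmf M)" unfolding M_def by (rule coins_finite)
  have mgf: "measure_pmf.expectation M (\<lambda>\<omega>. exp (t * S \<omega>)) \<le> exp (p * inner * (exp t - 1))" for t
    unfolding M_def S_def p_def inner_def by (rule mgf_bound[OF entries ij]) (use g0 in auto)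
  have b_eq: "dimsum_b A m \<gamma> \<omega> i j = (if \<gamma> / c \<le> 1 then S \<omega> / \<gamma> else S \<omega> / c)" for \<omega>
    unfolding dimsum_b_def S_def c_def by simp
  show ?thesis
  proof (cases "\<gamma> / c \<le> 1")
    case True
    have pv: "p = \<gamma> / c" unfolding p_def dimsum_p_def c_def[symmetric] using True by simp
    define \<mu> where "\<mu> = \<gamma> * inner / c"
    have mu_ge: "\<mu> \<ge> \<alpha>"
    proof -
      have "\<gamma> * inner / c \<ge> \<gamma> * (\<epsilon> * c) / c"
        using inner_ge g0 c by (intro divide_right_mono mult_left_mono) auto
      then show ?thesis using ge c unfolding \<mu>_def by simp
    qed
    have cb: "c * dimsum_b A m \<gamma> \<omega> i j = c * S \<omega> / \<gamma>" for \<omega>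
      using True by (simp add: b_eq)
    have ev_iff1: "c * dimsum_b A m \<gamma> \<omega> i j > (1 + \<delta>) * inner \<longleftrightarrow> S \<omega> > (1 + \<delta>) * \<mu>" for \<omega> \<delta>
      unfolding cb \<mu>_def using c g0 by (simp add: field_simps)
    have ev_iff2: "c * dimsum_b A m \<gamma> \<omega> i j < (1 - \<delta>) * inner \<longleftrightarrow> S \<omega> < (1 - \<delta>) * \<mu>" for \<omega> \<delta>
      unfolding cb \<mu>_def using c g0 by (simp add: field_simps)
    have pmu: "p * inner = \<mu>" unfolding pv \<mu>_def by simp
    show ?thesis
    proof (intro conjI allI impI)
      fix \<delta> :: real assume d: "\<delta> > 0"
      define t where "t = ln (1 + \<delta>)"
      have t0: "t \<ge> 0" unfolding t_def using d by simp
      define L where "L = \<delta> - (1 + \<delta>) * ln (1 + \<delta>)"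
      have L0: "L \<le> 0"
      proof -
        have "ln (1 / (1 + \<delta>)) \<le> 1 / (1 + \<delta>) - 1" by (rule ln_le_minus_one) (use d in auto)
        then have "- ln (1 + \<delta>) \<le> - \<delta> / (1 + \<delta>)" using d by (simp add: ln_div field_simps)
        then have "(1 + \<delta>) * ln (1 + \<delta>) \<ge> \<delta>" using d by (simp add: field_simps)
        then show ?thesis unfolding L_def by simp
      qed
      have "measure_pmf.prob M {\<omega>. c * dimsum_b A m \<gamma> \<omega> i j > (1 + \<delta>) * inner}
            \<le> measure_pmf.expectation M (\<lambda>\<omega>. exp (t * S \<omega>)) / exp (t * ((1 + \<delta>) * \<mu>))"
      proof (rule markov_pmf[OF finM])
        fix \<omega> assume "\<omega> \<in> {\<omega>. c * dimsum_b A m \<gamma> \<omega> i j > (1 + \<delta>) * inner}"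
        then have "S \<omega> > (1 + \<delta>) * \<mu>" using ev_iff1 by simp
        then show "exp (t * ((1 + \<delta>) * \<mu>)) \<le> exp (t * S \<omega>)"
          using t0 by (simp add: mult_left_mono)
      qed auto
      also have "\<dots> \<le> exp (p * inner * (exp t - 1)) / exp (t * ((1 + \<delta>) * \<mu>))"
        by (rule divide_right_mono[OF mgf]) simp
      also have "\<dots> = exp (\<mu> * L)"
        using d unfolding pmu t_def L_def by (simp add: exp_diff[symmetric] algebra_simps)
      also have "\<dots> \<le> exp (\<alpha> * L)"
        using mu_ge L0 by (simp add: mult_right_mono_neg)
      also have "\<dots> = (exp \<delta> / (1 + \<delta>) powr (1 + \<delta>)) powr \<alpha>"
        using d unfolding L_def by (simp add: powr_def ln_div ln_powr algebra_simps)
      finally show "measure_pmf.prob (dimsum_coins A m n \<gamma>)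
            {\<omega>. col_norm A m i * col_norm A m j * dimsum_b A m \<gamma> \<omega> i j
                   > (1 + \<delta>) * col_inner A m i j}
          \<le> (exp \<delta> / (1 + \<delta>) powr (1 + \<delta>)) powr \<alpha>"
        unfolding M_def c_def inner_def .
    next
      fix \<delta> :: real assume d: "0 < \<delta> \<and> \<delta> < 1"
      define t where "t = ln (1 - \<delta>)"
      have t0: "t \<le> 0" unfolding t_def using d by simp
      define K where "K = - \<delta> - (1 - \<delta>) * ln (1 - \<delta>)"
      have K: "K < - \<delta>\<^sup>2 / 2"
      proof -
        have x1: "1 / (1 - \<delta>) > 1" using d by simp
        have "ln (1 / (1 - \<delta>)) < (1 / (1 - \<delta>) - 1 / (1 / (1 - \<delta>))) / 2"
          by (rule ln_lt_aux[OF x1])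
        then have "- ln (1 - \<delta>) < (1 / (1 - \<delta>) - (1 - \<delta>)) / 2" using d by (simp add: ln_div)
        then have "(1 - \<delta>) * (- ln (1 - \<delta>)) < (1 - \<delta>) * ((1 / (1 - \<delta>) - (1 - \<delta>)) / 2)"
          using d by (intro mult_strict_left_mono) auto
        then have "- (1 - \<delta>) * ln (1 - \<delta>) < (1 - \<delta>) * ((1 / (1 - \<delta>) - (1 - \<delta>)) / 2)"
          by (simp add: algebra_simps)
        also have "\<dots> = \<delta> - \<delta>\<^sup>2 / 2" using d by (simp add: field_simps power2_eq_square)
        finally show ?thesis unfolding K_def by (simp add: algebra_simps)
      qed
      have "measure_pmf.prob M {\<omega>. c * dimsum_b A m \<gamma> \<omega> i j < (1 - \<delta>) * inner}
            \<le> measure_pmf.expectation M (\<lambda>\<omega>. exp (t * S \<omega>)) / exp (t * ((1 - \<delta>) * \<mu>))"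
      proof (rule markov_pmf[OF finM])
        fix \<omega> assume "\<omega> \<in> {\<omega>. c * dimsum_b A m \<gamma> \<omega> i j < (1 - \<delta>) * inner}"
        then have "S \<omega> < (1 - \<delta>) * \<mu>" using ev_iff2 by simp
        then show "exp (t * ((1 - \<delta>) * \<mu>)) \<le> exp (t * S \<omega>)"
          using t0 by (simp add: mult_left_mono_neg)
      qed auto
      also have "\<dots> \<le> exp (p * inner * (exp t - 1)) / exp (t * ((1 - \<delta>) * \<mu>))"
        by (rule divide_right_mono[OF mgf]) simp
      also have "\<dots> = exp (\<mu> * K)"
        using d unfolding pmu t_def K_def by (simp add: exp_diff[symmetric] algebra_simps)
      also have "\<dots> < exp (\<mu> * (- \<delta>\<^sup>2 / 2))"
        using mu_ge alpha K by (simp add: mult_strict_left_mono[of K "- \<delta>\<^sup>2 / 2" \<mu>, simplified])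
      also have "\<dots> \<le> exp (- \<alpha> * \<delta>\<^sup>2 / 2)"
        using mu_ge by (simp add: mult_right_mono)
      finally show "measure_pmf.prob (dimsum_coins A m n \<gamma>)
            {\<omega>. col_norm A m i * col_norm A m j * dimsum_b A m \<gamma> \<omega> i j
                   < (1 - \<delta>) * col_inner A m i j}
          < exp (- \<alpha> * \<delta>\<^sup>2 / 2)"
        unfolding M_def c_def inner_def .
    qed
  next
    case False
    have p1: "p = 1" unfolding p_def dimsum_p_def c_def[symmetric] using False by simp
    have supp: "c * dimsum_b A m \<gamma> \<omega> i j = inner" if w: "\<omega> \<in> set_pmf M" for \<omega>
    proof -
      have wS: "\<omega> (k,i,j)" if "(k,i,j) \<in> dimsum_slots A m n" for k
      proof -
        have "\<omega> (k,i,j) \<in> set_pmf (bernoulli_pmf p)"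
          using w that unfolding M_def dimsum_coins_def
          by (auto simp: set_Pi_pmf[OF slots_finite] PiE_dflt_def p_def)
        moreover have "False \<notin> set_pmf (bernoulli_pmf p)"
          using p1 by (simp add: set_pmf_eq)
        ultimately show ?thesis by (cases "\<omega> (k,i,j)") auto
      qed
      have "S \<omega> = inner"
        unfolding S_def inner_def col_inner_def
      proof (rule sum.cong)
        fix k assume k: "k \<in> {..<m}"
        show "dimsum_X A \<omega> i j k = A k i * A k j"
        proof (cases "A k i * A k j = 0")
          case True then show ?thesis by (simp add: dimsum_X_def)
        next
          case False
          then have "(k,i,j) \<in> dimsum_slots A m n" using k ij by (simp add: dimsum_slots_def)
          then show ?thesis using wS by (simp add: dimsum_X_def)
        qed
      qed simp
      then show ?thesis using False c by (simp add: b_eq)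
    qed
    have P1: "measure_pmf.prob M {\<omega>. c * dimsum_b A m \<gamma> \<omega> i j > (1 + \<delta>) * inner} = 0"
      if "\<delta> > 0" for \<delta>
      using supp that inner_pos by (subst measure_pmf_zero_iff) (auto simp: mult_less_cancel_right2)
    have P2: "measure_pmf.prob M {\<omega>. c * dimsum_b A m \<gamma> \<omega> i j < (1 - \<delta>) * inner} = 0"
      if "\<delta> > 0" for \<delta>
      using supp that inner_pos by (subst measure_pmf_zero_iff) (auto simp: algebra_simps dest: mult_pos_pos[of \<delta> inner])
    show ?thesis using P1 P2 unfolding M_def c_def inner_def by simp
  qed
qed

end
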